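(* Let $\mathcal V$ be a multivector field on $X$, assume $X$ is invariant, and let $A\subset X$ be a nonempty invariant set. Then $A$ is minimal if and only if $A$ is strongly connected.
   Context: $X$ is a finite $T_0$ topological space. For $A\subset X$, $\operatorname{cl}A$ is its closure and $\operatorname{mo}A:=\operatorname{cl}A\setminus A$. $A$ is locally closed if it is the intersection of an open and a closed subset of $X$. $H$ denotes relative singular homology. A multivector is a nonempty locally closed subset of $X$; a multivector field $\mathcal V$ on $X$ is a partition of $X$ into multivectors. For $x\in X$, $[x]$ denotes the element of $\mathcal V$ containing $x$. A multivector $V$ is critical if $H(\operatorname{cl}V,\operatorname{mo}V)\neq0$, regular otherwise. Put $\Pi_{\mathcal V}(x):=[x]\cup\operatorname{cl}\{x\}$ and $\Pi_{\mathcal V}(A):=\bigcup_{x\in A}\Pi_{\mathcal V}(x)$. A $\mathbb Z$-interval is $\mathbb Z\cap I$ for a real interval $I$. A solution in $A\subset X$ is a map $\varphi:D\to A$ on a $\mathbb Z$-interval $D$ with $\varphi(i+1)\in\Pi_{\mathcal V}(\varphi(i))$ whenever $i,i+1\in D$; it is full if $D=\mathbb Z$, and a path if $D$ is bounded, going from $\varphi(\min D)$ to $\varphi(\max D)$. A full solution $\varphi$ is essential if for every $t\in\mathbb Z$ with $[\varphi(t)]$ regular, the set $\{s\in\mathbb Z:\varphi(s)\notin[\varphi(t)]\}$ is unbounded below and unbounded above. $\operatorname{Inv}A$ is the set of $x\in A$ such that there is an essential full solution $\varphi$ with image in $A$ and $\varphi(0)=x$; $A$ is invariant if $\operatorname{Inv}A=A$.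 A nonempty set $A$ is strongly connected if for all $x,y\in A$ there is a path in $A$ from $x$ to $y$. For an invariant set $A$, a subset $B\subset A$ is an attractor in $A$ if $B$ is invariant and every path in $A$ starting in $B$ has image in $B$ (equivalently $\Pi_{\mathcal V}(B)\cap A\subset B$). An invariant set $A$ is minimal if the only nonempty attractor in $A$ is $A$ itself. *)

theory Defs
  imports "HOL-Analysis.Analysis" "HOL-Homology.Homology"
begin

definition locally_closed_in :: "'a topology \<Rightarrow> 'a set \<Rightarrow> bool" where
  "locally_closed_in X A \<longleftrightarrow> (\<exists>U C. openin X U \<and> closedin X C \<and> A = U \<inter> C)"

definition mouth :: "'a topology \<Rightarrow> 'a set \<Rightarrow> 'a set" where
  "mouth X A = X closure_of A - A"

definition multivector :: "'a topology \<Rightarrow> 'a set \<Rightarrow> bool" where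
  "multivector X V \<longleftrightarrow> V \<noteq> {} \<and> locally_closed_in X V"

definition multivector_field :: "'a topology \<Rightarrow> 'a set set \<Rightarrow> bool" where
  "multivector_field X \<V> \<longleftrightarrow>
     (\<forall>V\<in>\<V>. multivector X V) \<and> \<Union>\<V> = topspace X \<and>
     (\<forall>V\<in>\<V>. \<forall>W\<in>\<V>. V \<noteq> W \<longrightarrow> V \<inter> W = {})"

definition mv_class :: "'a set set \<Rightarrow> 'a \<Rightarrow> 'a set" where
  "mv_class \<V> x = (THE V. V \<in> \<V> \<and> x \<in> V)"

definition critical :: "'a topology \<Rightarrow> 'a set \<Rightarrow> bool" where
  "critical X V \<longleftrightarrow>
     \<not> (\<forall>p. trivial_group (relative_homology_group p (subtopology X (X closure_of V)) (mouth X V)))"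

definition regular :: "'a topology \<Rightarrow> 'a set \<Rightarrow> bool" where
  "regular X V \<longleftrightarrow> \<not> critical X V"

definition Pi_mv :: "'a topology \<Rightarrow> 'a set set \<Rightarrow> 'a \<Rightarrow> 'a set" where
  "Pi_mv X \<V> x = mv_class \<V> x \<union> X closure_of {x}"

definition Z_interval :: "int set \<Rightarrow> bool" where
  "Z_interval D \<longleftrightarrow> (\<exists>I::real set. is_interval I \<and> D = {k. real_of_int k \<in> I})"

definition solution :: "'a topology \<Rightarrow> 'a set set \<Rightarrow> 'a set \<Rightarrow> int set \<Rightarrow> (int \<Rightarrow> 'a) \<Rightarrow> bool" where
  "solution X \<V> A D \<phi> \<longleftrightarrow> Z_interval D \<and> \<phi> ` D \<subseteq> A \<and>
     (\<forall>i. i \<in> D \<and> i + 1 \<in> D \<longrightarrow> \<phi> (i + 1) \<in> Pi_mv X \<V> (\<phi> i))"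

definition path_in :: "'a topology \<Rightarrow> 'a set set \<Rightarrow> 'a set \<Rightarrow> int set \<Rightarrow> (int \<Rightarrow> 'a) \<Rightarrow> bool" where
  "path_in X \<V> A D \<phi> \<longleftrightarrow> solution X \<V> A D \<phi> \<and> D \<noteq> {} \<and> bdd_above D \<and> bdd_below D"

definition essential :: "'a topology \<Rightarrow> 'a set set \<Rightarrow> (int \<Rightarrow> 'a) \<Rightarrow> bool" where
  "essential X \<V> \<phi> \<longleftrightarrow>
     (\<forall>t. regular X (mv_class \<V> (\<phi> t)) \<longrightarrow>
        (let S = {s. \<phi> s \<notin> mv_class \<V> (\<phi> t)} in \<not> bdd_below S \<and> \<not> bdd_above S))"

definition Inv :: "'a topology \<Rightarrow> 'a set set \<Rightarrow> 'a set \<Rightarrow> 'a set" where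
  "Inv X \<V> A = {x \<in> A. \<exists>\<phi>. solution X \<V> A UNIV \<phi> \<and> essential X \<V> \<phi> \<and> \<phi> 0 = x}"

definition invariant :: "'a topology \<Rightarrow> 'a set set \<Rightarrow> 'a set \<Rightarrow> bool" where
  "invariant X \<V> A \<longleftrightarrow> Inv X \<V> A = A"

definition strongly_connected :: "'a topology \<Rightarrow> 'a set set \<Rightarrow> 'a set \<Rightarrow> bool" where
  "strongly_connected X \<V> A \<longleftrightarrow> A \<noteq> {} \<and>
     (\<forall>x\<in>A. \<forall>y\<in>A. \<exists>D \<phi>. path_in X \<V> A D \<phi> \<and> \<phi> (Min D) = x \<and> \<phi> (Max D) = y)"

definition attractor_in :: "'a topology \<Rightarrow> 'a set set \<Rightarrow> 'a set \<Rightarrow> 'a set \<Rightarrow> bool" where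
  "attractor_in X \<V> A B \<longleftrightarrow> B \<subseteq> A \<and> invariant X \<V> B \<and>
     (\<forall>D \<phi>. path_in X \<V> A D \<phi> \<and> \<phi> (Min D) \<in> B \<longrightarrow> \<phi> ` D \<subseteq> B)"

definition minimal :: "'a topology \<Rightarrow> 'a set set \<Rightarrow> 'a set \<Rightarrow> bool" where
  "minimal X \<V> A \<longleftrightarrow> invariant X \<V> A \<and>
     (\<forall>B. attractor_in X \<V> A B \<and> B \<noteq> {} \<longrightarrow> B = A)"

end

theory Submission
  imports Defs
begin

inductive walk :: "('a \<Rightarrow> 'a \<Rightarrow> bool) \<Rightarrow> 'a list \<Rightarrow> 'a \<Rightarrow> 'a \<Rightarrow> bool" for r where
  wnil: "walk r [] a a"
| wcons: "r a c \<Longrightarrow> walk r xs c b \<Longrightarrow> walk r (a#xs) a b"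

lemma walk_append: "walk r xs a b \<Longrightarrow> walk r ys b c \<Longrightarrow> walk r (xs@ys) a c"
  by (induction rule: walk.induct) (auto intro: walk.intros)

lemma rtranclp_walk: "r\<^sup>*\<^sup>* a b \<Longrightarrow> \<exists>xs. walk r xs a b"
proof (induction rule: converse_rtranclp_induct)
  case base then show ?case by (auto intro: walk.intros)
next
  case (step y z) then show ?case by (auto intro: walk.intros)
qed

lemma walk_nth: "walk r xs a b \<Longrightarrow> (xs@[b])!0 = a \<and> (\<forall>i<length xs. r ((xs@[b])!i) ((xs@[b])!(Suc i)))"
proof (induction rule: walk.induct)
  case (wnil a) then show ?case by simp
next
  case (wcons a c xs b)
  show ?case
  proof (intro conjI allI impI)
    show "((a # xs) @ [b]) ! 0 = a" by simp
    fix i assume "i < length (a#xs)"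
    show "r (((a # xs) @ [b]) ! i) (((a # xs) @ [b]) ! Suc i)"
    proof (cases i)
      case 0 then show ?thesis using wcons by simp
    next
      case (Suc j) then show ?thesis using wcons \<open>i < length (a#xs)\<close> by simp
    qed
  qed
qed

lemma walk_set: "walk r xs a b \<Longrightarrow> set xs \<subseteq> {y. r\<^sup>*\<^sup>* a y} \<and> r\<^sup>*\<^sup>* a b"
proof (induction rule: walk.induct)
  case (wnil a) then show ?case by simp
next
  case (wcons a c xs b)
  have "\<And>y. r\<^sup>*\<^sup>* c y \<Longrightarrow> r\<^sup>*\<^sup>* a y"
    using wcons.hyps(1) by (meson converse_rtranclp_into_rtranclp)
  then show ?case using wcons.IH by auto
qed

lemma walk_hd: "walk r xs a b \<Longrightarrow> xs \<noteq> [] \<Longrightarrow> a \<in> set xs"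
  by (auto elim: walk.cases)

lemma walk_nil: "walk r [] a b \<Longrightarrow> a = b"
  by (auto elim: walk.cases)

lemma periodic_unbounded:
  fixes P k m :: int
  assumes "P > 0" "0 \<le> m" "m < P" "{s. (s + k) mod P = m} \<subseteq> S"
  shows "\<not> bdd_above S \<and> \<not> bdd_below S"
proof
  show "\<not> bdd_above S"
  proof
    assume "bdd_above S"
    then obtain B where B: "\<And>s. s \<in> S \<Longrightarrow> s \<le> B" by (auto simp: bdd_above_def)
    define n where "n = \<bar>B\<bar> + \<bar>k\<bar> + 1"
    define s where "s = m - k + P * n"
    have "0 \<le> n" unfolding n_def by simp
    then have "1 * n \<le> P * n" using assms(1) by (intro mult_right_mono) auto
    then have "n \<le> P * n" by simp
    then have "s > B" using s_def n_def assms by linarith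
    moreover have "(s + k) mod P = m"
    proof -
      have "s + k = m + n * P" unfolding s_def by simp
      then show ?thesis using assms by simp
    qed
    then have "s \<in> S" using assms(4) by blast
    ultimately show False using B by fastforce
  qed
  show "\<not> bdd_below S"
  proof
    assume "bdd_below S"
    then obtain B where B: "\<And>s. s \<in> S \<Longrightarrow> B \<le> s" by (auto simp: bdd_below_def)
    define n where "n = \<bar>B\<bar> + \<bar>k\<bar> + \<bar>m\<bar> + 1"
    define s where "s = m - k - P * n"
    have "0 \<le> n" unfolding n_def by simp
    then have "1 * n \<le> P * n" using assms(1) by (intro mult_right_mono) auto
    then have "n \<le> P * n" by simp
    then have "s < B" using s_def n_def assms by linarith
    moreover have "(s + k) mod P = m"
    proof -
      have "s + k = m + (- n) * P" unfolding s_def by simp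
      then have "(s + k) mod P = (m + (- n) * P) mod P" by simp
      also have "\<dots> = m mod P" by (rule mod_mult_self1)
      also have "\<dots> = m" using assms by simp
      finally show ?thesis .
    qed
    then have "s \<in> S" using assms(4) by blast
    ultimately show False using B by fastforce
  qed
qed

lemma mvf_disj:
  assumes "multivector_field X \<V>" "V \<in> \<V>" "W \<in> \<V>" "y \<in> V" "y \<in> W"
  shows "V = W"
proof (rule ccontr)
  assume "V \<noteq> W"
  then have "V \<inter> W = {}" using assms(1-3) unfolding multivector_field_def by simp
  then show False using assms(4,5) by blast
qed

lemma mv_class_props:
  assumes "multivector_field X \<V>" "y \<in> topspace X"
  shows "mv_class \<V> y \<in> \<V> \<and> y \<in> mv_class \<V> y"
proof -
  have "y \<in> \<Union>\<V>" using assms unfolding multivector_field_def by simp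
  then obtain V where V: "V \<in> \<V>" "y \<in> V" by blast
  have "mv_class \<V> y = V" unfolding mv_class_def
  proof (rule the_equality)
    show "V \<in> \<V> \<and> y \<in> V" using V by simp
    fix W assume "W \<in> \<V> \<and> y \<in> W"
    then show "W = V" using mvf_disj[OF assms(1)] V by blast
  qed
  then show ?thesis using V by simp
qed

lemma mv_class_eq:
  assumes "multivector_field X \<V>" "y \<in> topspace X" "z \<in> mv_class \<V> y"
  shows "mv_class \<V> z = mv_class \<V> y"
proof -
  have 1: "mv_class \<V> y \<in> \<V>" using mv_class_props[OF assms(1,2)] by simp
  have "\<Union>\<V> = topspace X" using assms(1) unfolding multivector_field_def by simp
  then have "z \<in> topspace X" using 1 assms(3) by blast
  then have 2: "mv_class \<V> z \<in> \<V>" "z \<in> mv_class \<V> z" using mv_class_props[OF assms(1)] by simp_all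
  show ?thesis using mvf_disj[OF assms(1) 2(1) 1 2(2) assms(3)] .
qed

lemma path_interval:
  assumes "path_in X \<V> A D \<phi>"
  shows "finite D \<and> D = {Min D..Max D}"
proof -
  from assms have ne: "D \<noteq> {}" and ba: "bdd_above D" and bb: "bdd_below D"
    and Z: "Z_interval D" unfolding path_in_def solution_def by auto
  obtain lo hi where "\<forall>x\<in>D. x \<le> hi" "\<forall>x\<in>D. lo \<le> x" using ba bb
    unfolding bdd_above_def bdd_below_def by auto
  then have "D \<subseteq> {lo..hi}" by auto
  then have fin: "finite D" using finite_subset by blast
  obtain I where I: "is_interval I" "D = {k. real_of_int k \<in> I}" using Z unfolding Z_interval_def by blast
  have "Min D \<in> D" "Max D \<in> D" using fin ne by auto
  have "{Min D..Max D} \<subseteq> D"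
  proof
    fix k assume k: "k \<in> {Min D..Max D}"
    have "real_of_int (Min D) \<in> I" "real_of_int (Max D) \<in> I" using \<open>Min D \<in> D\<close> \<open>Max D \<in> D\<close> I by auto
    moreover have iv: "\<forall>a\<in>I. \<forall>b\<in>I. \<forall>x. a \<le> x \<and> x \<le> b \<longrightarrow> x \<in> I"
      using I(1) by (simp only: is_interval_1)
    moreover have "real_of_int (Min D) \<le> real_of_int k" "real_of_int k \<le> real_of_int (Max D)"
      using k by simp_all
    ultimately have "real_of_int k \<in> I" by blast
    then show "k \<in> D" using I(2) by simp
  qed
  moreover have "D \<subseteq> {Min D..Max D}" using fin by auto
  ultimately show ?thesis using fin by blast
qed

lemma periodic_solution:
  assumes mvf: "multivector_field X \<V>"
    and rP: "\<And>a b. r a b \<Longrightarrow> b \<in> Pi_mv X \<V> a"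
    and wk: "walk r zs w w" and ne: "zs \<noteq> []" and wz: "w \<in> set zs"
    and zC: "set zs \<subseteq> C" and CX: "C \<subseteq> topspace X"
    and good: "(\<exists>u\<in>set zs. \<exists>v\<in>set zs. mv_class \<V> u \<noteq> mv_class \<V> v) \<or> (\<exists>c\<in>set zs. critical X (mv_class \<V> c))"
  shows "\<exists>\<psi>. solution X \<V> C UNIV \<psi> \<and> essential X \<V> \<psi> \<and> \<psi> 0 = w"
proof -
  define P where "P = length zs"
  have P0: "0 < P" using ne P_def by simp
  obtain k where k: "k < P" "zs ! k = w" using wz P_def by (metis in_set_conv_nth)
  define \<psi> where "\<psi> = (\<lambda>s::int. zs ! nat ((s + int k) mod int P))"
  have idx: "nat ((s + int k) mod int P) < P" for s
    using P0 by (simp add: nat_less_iff)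
  have wn: "(zs@[w])!0 = w" and wst: "\<forall>i<P. r ((zs@[w])!i) ((zs@[w])!(Suc i))"
    using walk_nth[OF wk] P_def by auto
  have z0: "zs ! 0 = w" using wn ne by (simp add: nth_append)
  have cyc: "r (zs!j) (zs!((Suc j) mod P))" if j: "j < P" for j
  proof (cases "Suc j < P")
    case True
    then have "r ((zs@[w])!j) ((zs@[w])!(Suc j))" using wst j by blast
    then show ?thesis using True j P_def by (simp add: nth_append)
  next
    case False
    then have sj: "Suc j = P" using j by simp
    have "r ((zs@[w])!j) ((zs@[w])!(Suc j))" using wst j by blast
    then show ?thesis using sj j P_def z0 by (simp add: nth_append)
  qed
  have psiC: "\<psi> s \<in> set zs" for s
    unfolding \<psi>_def using idx[of s] P_def by simp
  have sol: "solution X \<V> C UNIV \<psi>"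
    unfolding solution_def
  proof (intro conjI allI impI)
    show "Z_interval UNIV" unfolding Z_interval_def
      by (rule exI[of _ UNIV]) simp
    show "\<psi> ` UNIV \<subseteq> C" using psiC zC by blast
    fix i :: int
    define j where "j = nat ((i + int k) mod int P)"
    have jP: "j < P" using idx j_def by simp
    have "(i + 1 + int k) mod int P = ((i + int k) mod int P + 1) mod int P"
      using mod_add_left_eq[of "i + int k" "int P" 1, symmetric] by (simp add: algebra_simps)
    also have "(i + int k) mod int P = int j" unfolding j_def using P0 by simp
    also have "(int j + 1) mod int P = int (Suc j mod P)" by (simp add: of_nat_mod add.commute)
    finally have "nat ((i + 1 + int k) mod int P) = Suc j mod P" by simp
    then have "\<psi> (i + 1) = zs ! (Suc j mod P)" unfolding \<psi>_def by simp
    moreover have "\<psi> i = zs ! j" unfolding \<psi>_def j_def by simp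
    ultimately show "\<psi> (i + 1) \<in> Pi_mv X \<V> (\<psi> i)" using rP cyc[OF jP] by simp
  qed
  have ess: "essential X \<V> \<psi>"
    unfolding essential_def Let_def
  proof (intro allI impI)
    fix t assume reg: "regular X (mv_class \<V> (\<psi> t))"
    define u0 where "u0 = \<psi> t"
    have u0X: "u0 \<in> topspace X" using psiC zC CX u0_def by blast
    have "\<exists>v\<in>set zs. v \<notin> mv_class \<V> u0"
    proof (rule ccontr)
      assume "\<not> ?thesis"
      then have allin: "\<And>v. v \<in> set zs \<Longrightarrow> mv_class \<V> v = mv_class \<V> u0"
        using mv_class_eq[OF mvf u0X] by blast
      show False
        using good
      proof
        assume "\<exists>u\<in>set zs. \<exists>v\<in>set zs. mv_class \<V> u \<noteq> mv_class \<V> v"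
        then show False using allin by metis
      next
        assume "\<exists>c\<in>set zs. critical X (mv_class \<V> c)"
        then show False using allin reg u0_def unfolding regular_def by metis
      qed
    qed
    then obtain m where m: "m < P" "zs ! m \<notin> mv_class \<V> u0"
      using P_def by (metis in_set_conv_nth)
    have sub: "{s. (s + int k) mod int P = int m} \<subseteq> {s. \<psi> s \<notin> mv_class \<V> (\<psi> t)}"
    proof
      fix s assume "s \<in> {s. (s + int k) mod int P = int m}"
      then have "nat ((s + int k) mod int P) = m" by simp
      then have "\<psi> s = zs ! m" unfolding \<psi>_def by simp
      then show "s \<in> {s. \<psi> s \<notin> mv_class \<V> (\<psi> t)}" using m u0_def by simp
    qed
    show "\<not> bdd_below {s. \<psi> s \<notin> mv_class \<V> (\<psi> t)} \<and> \<not> bdd_above {s. \<psi> s \<notin> mv_class \<V> (\<psi> t)}"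
      using periodic_unbounded[OF _ _ _ sub] P0 m(1) by simp
  qed
  have "\<psi> 0 = w" unfolding \<psi>_def using k P0 by simp
  then show ?thesis using sol ess by blast
qed

theorem proposition6p7:
  fixes X :: "'a topology" and \<V> :: "'a set set" and A :: "'a set"
  assumes "finite (topspace X)" and "t0_space X"
    and "multivector_field X \<V>"
    and "invariant X \<V> (topspace X)"
    and "A \<subseteq> topspace X" and "A \<noteq> {}" and "invariant X \<V> A"
  shows "minimal X \<V> A \<longleftrightarrow> strongly_connected X \<V> A"
proof -
  note fin = assms(1) and mvf = assms(3) and AX = assms(5) and Ane = assms(6) and invA = assms(7)
  define st where "st = (\<lambda>a b. a \<in> A \<and> b \<in> A \<and> b \<in> Pi_mv X \<V> a)"
  have st_refl: "st a a" if "a \<in> A" for a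
  proof -
    have "{a} \<subseteq> topspace X" using that AX by auto
    then have "a \<in> X closure_of {a}" using closure_of_subset by blast
    then show ?thesis using that unfolding st_def Pi_mv_def by simp
  qed
  have rtA: "b \<in> A" if "st\<^sup>*\<^sup>* a b" "a \<in> A" for a b
    using that by (induction rule: rtranclp_induct) (auto simp: st_def)
  have rt_path: "\<exists>D \<phi>. path_in X \<V> A D \<phi> \<and> \<phi> (Min D) = a \<and> \<phi> (Max D) = b"
    if rab: "st\<^sup>*\<^sup>* a b" and aA: "a \<in> A" for a b
  proof -
    have bA: "b \<in> A" using rtA rab aA by blast
    obtain xs where wk: "walk st xs a b" using rtranclp_walk[OF rab] by blast
    define n where "n = length xs"
    define D where "D = {0..int n}"
    define \<phi> where "\<phi> = (\<lambda>i::int. (xs@[b]) ! nat i)"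
    have w0: "(xs@[b])!0 = a" and wst: "\<forall>i<n. st ((xs@[b])!i) ((xs@[b])!(Suc i))"
      using walk_nth[OF wk] n_def by auto
    have finD: "finite D" "D \<noteq> {}" unfolding D_def by auto
    have ZD: "Z_interval D" unfolding Z_interval_def D_def
      by (rule exI[of _ "{0..real n}"]) auto
    have inA: "\<phi> i \<in> A" if "i \<in> D" for i
    proof (cases "nat i < n")
      case True
      then show ?thesis using wst unfolding \<phi>_def st_def by blast
    next
      case False
      then have "nat i = n" using that unfolding D_def by auto
      then show ?thesis unfolding \<phi>_def n_def using bA by simp
    qed
    have sol: "solution X \<V> A D \<phi>"
      unfolding solution_def
    proof (intro conjI allI impI)
      show "Z_interval D" by (rule ZD)
      show "\<phi> ` D \<subseteq> A" using inA by blast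
      fix i assume i: "i \<in> D \<and> i + 1 \<in> D"
      then have "nat i < n" "nat (i + 1) = Suc (nat i)" unfolding D_def by auto
      then show "\<phi> (i + 1) \<in> Pi_mv X \<V> (\<phi> i)" using wst unfolding \<phi>_def st_def by auto
    qed
    have "path_in X \<V> A D \<phi>" unfolding path_in_def
      using sol finD by (simp add: bdd_above_finite bdd_below_finite)
    moreover have "Min D = 0" unfolding D_def by (intro Min_eqI) auto
    moreover have "Max D = int n" unfolding D_def by (intro Max_eqI) auto
    moreover have "\<phi> 0 = a" using w0 unfolding \<phi>_def by simp
    moreover have "\<phi> (int n) = b" unfolding \<phi>_def n_def by simp
    ultimately show ?thesis by metis
  qed
  have path_closed: "\<phi> ` D \<subseteq> C"
    if cl: "\<And>y z. y \<in> C \<Longrightarrow> st y z \<Longrightarrow> z \<in> C" and p: "path_in X \<V> A D \<phi>" and m: "\<phi> (Min D) \<in> C"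
    for C D \<phi>
  proof -
    have DI: "D = {Min D..Max D}" using path_interval[OF p] by blast
    have sol: "solution X \<V> A D \<phi>" using p unfolding path_in_def by blast
    have "k \<le> Max D \<longrightarrow> \<phi> k \<in> C" if "Min D \<le> k" for k
      using that
    proof (induction k rule: int_ge_induct)
      case base then show ?case using m by simp
    next
      case (step k)
      show ?case
      proof
        assume "k + 1 \<le> Max D"
        then have kD: "k \<in> D" "k + 1 \<in> D" using step(1) DI by auto
        then have "\<phi> k \<in> A" "\<phi> (k+1) \<in> A" "\<phi> (k + 1) \<in> Pi_mv X \<V> (\<phi> k)"
          using sol unfolding solution_def by blast+
        then have "st (\<phi> k) (\<phi> (k+1))" unfolding st_def by simp
        moreover have "\<phi> k \<in> C" using step(2) \<open>k + 1 \<le> Max D\<close> by simp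
        ultimately show "\<phi> (k + 1) \<in> C" using cl by blast
      qed
    qed
    then have H: "\<And>k. Min D \<le> k \<Longrightarrow> k \<le> Max D \<Longrightarrow> \<phi> k \<in> C" by blast
    show ?thesis
    proof
      fix y assume "y \<in> \<phi> ` D"
      then obtain k where "k \<in> D" "y = \<phi> k" by blast
      moreover have "Min D \<le> k" "k \<le> Max D" using \<open>k \<in> D\<close> DI by (metis atLeastAtMost_iff)+
      ultimately show "y \<in> C" using H by blast
    qed
  qed
  show ?thesis
  proof
    assume min: "minimal X \<V> A"
    define R where "R = (\<lambda>y. {z. st\<^sup>*\<^sup>* y z})"
    have RA: "R y \<subseteq> A" if "y \<in> A" for y using rtA that unfolding R_def by blast
    have finA: "finite A" using fin AX finite_subset by blast
    define mc where "mc = Min ((\<lambda>y. card (R y)) ` A)"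
    have "mc \<in> (\<lambda>y. card (R y)) ` A" unfolding mc_def using finA Ane by (intro Min_in) auto
    then obtain x where xA: "x \<in> A" and xmc: "card (R x) = mc" by auto
    have xmin: "card (R x) \<le> card (R y)" if "y \<in> A" for y
      unfolding xmc mc_def using finA that by (intro Min_le) auto
    define C where "C = R x"
    have CA: "C \<subseteq> A" unfolding C_def using RA xA by blast
    have xC: "x \<in> C" unfolding C_def R_def by simp
    have Ccl: "z \<in> C" if "y \<in> C" "st y z" for y z
    proof -
      have "st\<^sup>*\<^sup>* x y" using that(1) unfolding C_def R_def by simp
      then have "st\<^sup>*\<^sup>* x z" using that(2) by (rule rtranclp.rtrancl_into_rtrancl)
      then show ?thesis unfolding C_def R_def by simp
    qed
    have bk: "st\<^sup>*\<^sup>* y x" if "y \<in> C" for y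
    proof -
      have yA: "y \<in> A" using that CA by blast
      have xy: "st\<^sup>*\<^sup>* x y" using that unfolding C_def R_def by simp
      have sub: "R y \<subseteq> R x" unfolding R_def
      proof
        fix z assume "z \<in> {z. st\<^sup>*\<^sup>* y z}"
        then have "st\<^sup>*\<^sup>* y z" by simp
        then show "z \<in> {z. st\<^sup>*\<^sup>* x z}" using xy rtranclp_trans[of st x y z] by simp
      qed
      have finR: "finite (R x)" using RA[OF xA] finA finite_subset by blast
      have "card (R y) \<le> card (R x)" by (rule card_mono[OF finR sub])
      then have "card (R y) = card (R x)" using xmin[OF yA] by simp
      then have "R y = R x" using card_subset_eq[OF finR sub] by simp
      then show ?thesis using xC unfolding C_def R_def by auto
    qed
    have mutual: "st\<^sup>*\<^sup>* u v" if "u \<in> C" "v \<in> C" for u v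
    proof -
      have "st\<^sup>*\<^sup>* x v" using that(2) unfolding C_def R_def by simp
      then show ?thesis using bk[OF that(1)] rtranclp_trans[of st u x v] by simp
    qed
    have CX: "C \<subseteq> topspace X" using CA AX by blast
    have nwalk: "\<exists>xs. walk st xs a b \<and> xs \<noteq> [] \<and> a \<in> set xs \<and> set xs \<subseteq> C"
      if abC: "a \<in> C" "b \<in> C" for a b
    proof -
      obtain xs where wk: "walk st xs a b" using rtranclp_walk[OF mutual[OF abC]] by blast
      have setC: "set ys \<subseteq> C" if "walk st ys a b" for ys
      proof -
        have "set ys \<subseteq> {y. st\<^sup>*\<^sup>* a y}" using walk_set[OF that] by blast
        moreover have "{y. st\<^sup>*\<^sup>* a y} \<subseteq> C"
        proof
          fix y assume "y \<in> {y. st\<^sup>*\<^sup>* a y}"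
          then have "st\<^sup>*\<^sup>* a y" by simp
          moreover have "st\<^sup>*\<^sup>* x a" using \<open>a \<in> C\<close> unfolding C_def R_def by simp
          ultimately show "y \<in> C" unfolding C_def R_def using rtranclp_trans[of st x a y] by simp
        qed
        ultimately show ?thesis by blast
      qed
      show ?thesis
      proof (cases "xs = []")
        case True
        from wk True have "walk st [] a b" by simp
        then have ab: "a = b" by (rule walk_nil)
        have "a \<in> A" using abC CA by blast
        then have "st a a" by (rule st_refl)
        then have "walk st [a] a a" by (rule walk.wcons[OF _ walk.wnil])
        then have "walk st [a] a b" using ab by simp
        then show ?thesis using setC by fastforce
      next
        case False
        then show ?thesis using wk walk_hd[OF wk] setC by blast
      qed
    qed
    have good: "(\<exists>u\<in>C. \<exists>v\<in>C. mv_class \<V> u \<noteq> mv_class \<V> v) \<or> (\<exists>c\<in>C. critical X (mv_class \<V> c))"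
    proof (rule ccontr)
      assume ng: "\<not> ?thesis"
      have same: "mv_class \<V> u = mv_class \<V> x" if "u \<in> C" for u using ng that xC by blast
      have regx: "regular X (mv_class \<V> x)" using ng xC unfolding regular_def by blast
      have "x \<in> Inv X \<V> A" using invA xA unfolding invariant_def by simp
      then obtain \<phi> where sol: "solution X \<V> A UNIV \<phi>" and ess: "essential X \<V> \<phi>" and p0: "\<phi> 0 = x"
        unfolding Inv_def by blast
      have fwd: "\<phi> (int n) \<in> C" for n
      proof (induction n)
        case 0 then show ?case using p0 xC by simp
      next
        case (Suc n)
        have "\<phi> (int n) \<in> A" "\<phi> (int n + 1) \<in> A" "\<phi> (int n + 1) \<in> Pi_mv X \<V> (\<phi> (int n))"
          using sol unfolding solution_def by blast+
        then have "st (\<phi> (int n)) (\<phi> (int n + 1))" unfolding st_def by simp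
        then have "\<phi> (int n + 1) \<in> C" using Ccl Suc by blast
        then show ?case by (simp add: add.commute)
      qed
      have E: "\<forall>t. regular X (mv_class \<V> (\<phi> t)) \<longrightarrow> \<not> bdd_below {s. \<phi> s \<notin> mv_class \<V> (\<phi> t)} \<and> \<not> bdd_above {s. \<phi> s \<notin> mv_class \<V> (\<phi> t)}"
        using ess unfolding essential_def Let_def by simp
      have "regular X (mv_class \<V> (\<phi> 0))" using regx p0 by simp
      then have "\<not> bdd_above {s. \<phi> s \<notin> mv_class \<V> (\<phi> 0)}" by (rule conjunct2[OF E[rule_format]])
      moreover have "{s. \<phi> s \<notin> mv_class \<V> (\<phi> 0)} \<subseteq> {..0}"
      proof
        fix s assume s: "s \<in> {s. \<phi> s \<notin> mv_class \<V> (\<phi> 0)}"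
        show "s \<in> {..0}"
        proof (rule ccontr)
          assume "s \<notin> {..0}"
          then have "s = int (nat s)" by simp
          then have "\<phi> s \<in> C" using fwd by metis
          then have "\<phi> s \<in> topspace X" using CX by blast
          then have "\<phi> s \<in> mv_class \<V> (\<phi> s)" using mv_class_props[OF mvf] by blast
          moreover have "mv_class \<V> (\<phi> s) = mv_class \<V> x" using same \<open>\<phi> s \<in> C\<close> by blast
          ultimately have "\<phi> s \<in> mv_class \<V> (\<phi> 0)" using p0 by simp
          then show False using s by simp
        qed
      qed
      ultimately show False by (meson bdd_above_Iic bdd_above_mono)
    qed
    have loop: "\<exists>zs. walk st zs w w \<and> zs \<noteq> [] \<and> w \<in> set zs \<and> set zs \<subseteq> C \<and>
       ((\<exists>u\<in>set zs. \<exists>v\<in>set zs. mv_class \<V> u \<noteq> mv_class \<V> v) \<or> (\<exists>c\<in>set zs. critical X (mv_class \<V> c)))"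
      if wC: "w \<in> C" for w
      using good
    proof
      assume "\<exists>u\<in>C. \<exists>v\<in>C. mv_class \<V> u \<noteq> mv_class \<V> v"
      then obtain u v where uv: "u \<in> C" "v \<in> C" "mv_class \<V> u \<noteq> mv_class \<V> v" by blast
      obtain xs1 where 1: "walk st xs1 w u" "xs1 \<noteq> []" "w \<in> set xs1" "set xs1 \<subseteq> C" using nwalk wC uv by blast
      obtain xs2 where 2: "walk st xs2 u v" "xs2 \<noteq> []" "u \<in> set xs2" "set xs2 \<subseteq> C" using nwalk wC uv by blast
      obtain xs3 where 3: "walk st xs3 v w" "xs3 \<noteq> []" "v \<in> set xs3" "set xs3 \<subseteq> C" using nwalk wC uv by blast
      have "walk st (xs1 @ xs2 @ xs3) w w" by (rule walk_append[OF 1(1) walk_append[OF 2(1) 3(1)]])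
      moreover have "u \<in> set (xs1 @ xs2 @ xs3)" "v \<in> set (xs1 @ xs2 @ xs3)" using 2(3) 3(3) by simp_all
      then have "\<exists>u\<in>set (xs1 @ xs2 @ xs3). \<exists>v\<in>set (xs1 @ xs2 @ xs3). mv_class \<V> u \<noteq> mv_class \<V> v"
        using uv(3) by blast
      moreover have "xs1 @ xs2 @ xs3 \<noteq> []" "w \<in> set (xs1 @ xs2 @ xs3)" "set (xs1 @ xs2 @ xs3) \<subseteq> C"
        using 1 2 3 by auto
      ultimately show ?thesis by blast
    next
      assume "\<exists>c\<in>C. critical X (mv_class \<V> c)"
      then obtain c where c: "c \<in> C" "critical X (mv_class \<V> c)" by blast
      obtain xs1 where 1: "walk st xs1 w c" "xs1 \<noteq> []" "w \<in> set xs1" "set xs1 \<subseteq> C" using nwalk wC c by blast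
      obtain xs2 where 2: "walk st xs2 c w" "xs2 \<noteq> []" "c \<in> set xs2" "set xs2 \<subseteq> C" using nwalk wC c by blast
      have "walk st (xs1 @ xs2) w w" by (rule walk_append[OF 1(1) 2(1)])
      moreover have "c \<in> set (xs1 @ xs2)" using 2(3) by simp
      then have "\<exists>c\<in>set (xs1 @ xs2). critical X (mv_class \<V> c)" using c(2) by blast
      moreover have "xs1 @ xs2 \<noteq> []" "w \<in> set (xs1 @ xs2)" "set (xs1 @ xs2) \<subseteq> C"
        using 1 2 by auto
      ultimately show ?thesis by blast
    qed
    have invC: "invariant X \<V> C"
      unfolding invariant_def Inv_def
    proof (intro equalityI subsetI)
      fix w assume "w \<in> {x \<in> C. \<exists>\<phi>. solution X \<V> C UNIV \<phi> \<and> essential X \<V> \<phi> \<and> \<phi> 0 = x}"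
      then show "w \<in> C" by blast
    next
      fix w assume wC: "w \<in> C"
      obtain zs where zs: "walk st zs w w" "zs \<noteq> []" "w \<in> set zs" "set zs \<subseteq> C"
        "(\<exists>u\<in>set zs. \<exists>v\<in>set zs. mv_class \<V> u \<noteq> mv_class \<V> v) \<or> (\<exists>c\<in>set zs. critical X (mv_class \<V> c))"
        using loop[OF wC] by blast
      have "\<exists>\<psi>. solution X \<V> C UNIV \<psi> \<and> essential X \<V> \<psi> \<and> \<psi> 0 = w"
        by (rule periodic_solution[OF mvf _ zs(1-4) CX zs(5)]) (simp add: st_def)
      then show "w \<in> {x \<in> C. \<exists>\<phi>. solution X \<V> C UNIV \<phi> \<and> essential X \<V> \<phi> \<and> \<phi> 0 = x}"
        using wC by blast
    qed
    have "attractor_in X \<V> A C"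
      unfolding attractor_in_def
    proof (intro conjI allI impI)
      show "C \<subseteq> A" by (rule CA)
      show "invariant X \<V> C" by (rule invC)
      fix D \<phi> assume "path_in X \<V> A D \<phi> \<and> \<phi> (Min D) \<in> C"
      then show "\<phi> ` D \<subseteq> C" using path_closed[of C D \<phi>] Ccl by blast
    qed
    then have CeqA: "C = A" using min xC unfolding minimal_def by blast
    show "strongly_connected X \<V> A"
      unfolding strongly_connected_def
    proof (intro conjI ballI)
      show "A \<noteq> {}" by (rule Ane)
      fix a b assume "a \<in> A" "b \<in> A"
      then show "\<exists>D \<phi>. path_in X \<V> A D \<phi> \<and> \<phi> (Min D) = a \<and> \<phi> (Max D) = b"
        using rt_path mutual CeqA by blast
    qed
  next
    assume sc: "strongly_connected X \<V> A"
    show "minimal X \<V> A"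
      unfolding minimal_def
    proof (intro conjI allI impI)
      show "invariant X \<V> A" by (rule invA)
      fix B assume B: "attractor_in X \<V> A B \<and> B \<noteq> {}"
      then have BA: "B \<subseteq> A" and Bcl: "\<forall>D \<phi>. path_in X \<V> A D \<phi> \<and> \<phi> (Min D) \<in> B \<longrightarrow> \<phi> ` D \<subseteq> B"
        unfolding attractor_in_def by simp_all
      obtain b where bB: "b \<in> B" using B by blast
      have "A \<subseteq> B"
      proof
        fix a assume aA: "a \<in> A"
        obtain D \<phi> where p: "path_in X \<V> A D \<phi>" "\<phi> (Min D) = b" "\<phi> (Max D) = a"
          using sc bB BA aA unfolding strongly_connected_def by blast
        have "\<phi> ` D \<subseteq> B" using Bcl p bB by simp
        moreover have "Max D \<in> D" using path_interval[OF p(1)] p(1) unfolding path_in_def by auto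
        ultimately show "a \<in> B" using p(3) by blast
      qed
      then show "B = A" using BA by blast
    qed
  qed
qed

end
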